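(* Let $\mathbb{E}$ be a finitely complete category endowed with a fibrational class $\Sigma$ of split epimorphisms. (1) If $\mathbb{E}$ is $\Sigma$-protomodular, then it is a $\Sigma$-Mal'tsev category. (2) If in addition $\Sigma$ is point-congruous, then for every morphism $y\colon Y'\to Y$ the base-change functor $y^*\colon\Sigma_Y(\mathbb{E})\to\Sigma_{Y'}(\mathbb{E})$ (pullback along $y$) is conservative.
   Context: A split epimorphism is a pair $(f,s)$ with $fs=1$. A class $\Sigma$ of split epimorphisms is fibrational if it contains all split epimorphisms $(f,s)$ with $f$ invertible and is stable under pullback along any morphism; it is point-congruous if moreover the full subcategory $\Sigma(\mathbb{E})$ of the category $\mathrm{Pt}(\mathbb{E})$ of split epimorphisms (with commuting squares as morphisms) is closed under finite limits in $\mathrm{Pt}(\mathbb{E})$. $\Sigma_Y(\mathbb{E})$ is the category of split epimorphisms in $\Sigma$ with codomain $Y$ and morphisms commuting with the epimorphisms and the splittings. A pair of morphisms with common codomain $Z$ is jointly extremally epic if it factors jointly through no non-invertible monomorphism into $Z$. $\mathbb{E}$ is $\Sigma$-Mal'tsev if for every split epimorphism $(f,s)\colon X\rightleftarrows Y$ in $\Sigma$ and every split epimorphism $(g,t)$ with $g\colon Y'\to Y$, letting $X'=Y'\times_YX$, $s'=(1_{Y'},sg)$, $\bar t=(tf,1_X)$, the pair $(s',\bar t)$ is jointly extremally epic. A split epimorphism $(f,s)\colon X\rightleftarrows Y$ is strongly split when for every morphism $y\colon\bar Y\to Y$, with $x\colon\bar Y\times_YX\to X$ the pullback projection, the pair $(x,s)$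 is jointly extremally epic. $\mathbb{E}$ is $\Sigma$-protomodular when every split epimorphism in $\Sigma$ is strongly split. *)

theory Defs
  imports Main
begin

text \<open>A category with objects of type 'o and arrows of type 'a.
  Cmp C g f is the composite g after f.\<close>

record ('o, 'a) cat =
  Obj :: "'o set"
  Arr :: "'a set"
  Dom :: "'a \<Rightarrow> 'o"
  Cod :: "'a \<Rightarrow> 'o"
  Cmp :: "'a \<Rightarrow> 'a \<Rightarrow> 'a"
  Idn :: "'o \<Rightarrow> 'a"

definition hom :: "('o, 'a, 'm) cat_scheme \<Rightarrow> 'o \<Rightarrow> 'o \<Rightarrow> 'a set" where
  "hom C X Y = {f \<in> Arr C. Dom C f = X \<and> Cod C f = Y}"

definition category :: "('o, 'a, 'm) cat_scheme \<Rightarrow> bool" where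
  "category C \<longleftrightarrow>
     (\<forall>f \<in> Arr C. Dom C f \<in> Obj C \<and> Cod C f \<in> Obj C) \<and>
     (\<forall>X \<in> Obj C. Idn C X \<in> hom C X X) \<and>
     (\<forall>f g. f \<in> Arr C \<and> g \<in> Arr C \<and> Cod C f = Dom C g \<longrightarrow>
        Cmp C g f \<in> hom C (Dom C f) (Cod C g)) \<and>
     (\<forall>f \<in> Arr C. Cmp C f (Idn C (Dom C f)) = f \<and> Cmp C (Idn C (Cod C f)) f = f) \<and>
     (\<forall>f g h. f \<in> Arr C \<and> g \<in> Arr C \<and> h \<in> Arr C \<and> Cod C f = Dom C g \<and> Cod C g = Dom C h \<longrightarrow>
        Cmp C h (Cmp C g f) = Cmp C (Cmp C h g) f)"

definition iso :: "('o, 'a, 'm) cat_scheme \<Rightarrow> 'a \<Rightarrow> bool" where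
  "iso C f \<longleftrightarrow> f \<in> Arr C \<and>
     (\<exists>g \<in> hom C (Cod C f) (Dom C f).
        Cmp C g f = Idn C (Dom C f) \<and> Cmp C f g = Idn C (Cod C f))"

definition mono :: "('o, 'a, 'm) cat_scheme \<Rightarrow> 'a \<Rightarrow> bool" where
  "mono C m \<longleftrightarrow> m \<in> Arr C \<and>
     (\<forall>a b. a \<in> Arr C \<and> b \<in> Arr C \<and> Cod C a = Dom C m \<and> Cod C b = Dom C m \<and>
        Dom C a = Dom C b \<and> Cmp C m a = Cmp C m b \<longrightarrow> a = b)"

definition is_pullback :: "('o, 'a, 'm) cat_scheme \<Rightarrow> 'a \<Rightarrow> 'a \<Rightarrow> 'a \<Rightarrow> 'a \<Rightarrow> bool" where
  "is_pullback C f g p q \<longleftrightarrow>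
     f \<in> Arr C \<and> g \<in> Arr C \<and> Cod C f = Cod C g \<and>
     p \<in> hom C (Dom C p) (Dom C f) \<and> q \<in> hom C (Dom C p) (Dom C g) \<and>
     Cmp C f p = Cmp C g q \<and>
     (\<forall>W u v. u \<in> hom C W (Dom C f) \<and> v \<in> hom C W (Dom C g) \<and> Cmp C f u = Cmp C g v \<longrightarrow>
        (\<exists>!m. m \<in> hom C W (Dom C p) \<and> Cmp C p m = u \<and> Cmp C q m = v))"

record ('o, 'a) diagram =
  Vtx :: "nat set"
  Edg :: "nat set"
  Src :: "nat \<Rightarrow> nat"
  Tgt :: "nat \<Rightarrow> nat"
  DObj :: "nat \<Rightarrow> 'o"
  DArr :: "nat \<Rightarrow> 'a"

definition finite_diagram :: "('o, 'a, 'm) cat_scheme \<Rightarrow> ('o, 'a) diagram \<Rightarrow> bool" where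
  "finite_diagram C D \<longleftrightarrow> finite (Vtx D) \<and> finite (Edg D) \<and>
     (\<forall>v \<in> Vtx D. DObj D v \<in> Obj C) \<and>
     (\<forall>e \<in> Edg D. Src D e \<in> Vtx D \<and> Tgt D e \<in> Vtx D \<and>
        DArr D e \<in> hom C (DObj D (Src D e)) (DObj D (Tgt D e)))"

definition is_cone :: "('o, 'a, 'm) cat_scheme \<Rightarrow> ('o, 'a) diagram \<Rightarrow> 'o \<Rightarrow> (nat \<Rightarrow> 'a) \<Rightarrow> bool" where
  "is_cone C D L lam \<longleftrightarrow> L \<in> Obj C \<and>
     (\<forall>v \<in> Vtx D. lam v \<in> hom C L (DObj D v)) \<and>
     (\<forall>e \<in> Edg D. Cmp C (DArr D e) (lam (Src D e)) = lam (Tgt D e))"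

definition is_limit :: "('o, 'a, 'm) cat_scheme \<Rightarrow> ('o, 'a) diagram \<Rightarrow> 'o \<Rightarrow> (nat \<Rightarrow> 'a) \<Rightarrow> bool" where
  "is_limit C D L lam \<longleftrightarrow> is_cone C D L lam \<and>
     (\<forall>M mu. is_cone C D M mu \<longrightarrow>
        (\<exists>!m. m \<in> hom C M L \<and> (\<forall>v \<in> Vtx D. Cmp C (lam v) m = mu v)))"

definition finitely_complete :: "('o, 'a, 'm) cat_scheme \<Rightarrow> bool" where
  "finitely_complete C \<longleftrightarrow> (\<forall>D. finite_diagram C D \<longrightarrow> (\<exists>L lam. is_limit C D L lam))"

definition split_epi :: "('o, 'a, 'm) cat_scheme \<Rightarrow> 'a \<Rightarrow> 'a \<Rightarrow> bool" where
  "split_epi C f s \<longleftrightarrow> f \<in> Arr C \<and> s \<in> hom C (Cod C f) (Dom C f) \<and>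
     Cmp C f s = Idn C (Cod C f)"

text \<open>Objects of Pt(E): split epimorphisms (f,s). Arrows: (P, Q, a, b), a commuting
  square from P to Q (a between the domains, b between the codomains).\<close>

definition Pt :: "('o, 'a, 'm) cat_scheme \<Rightarrow> ('a \<times> 'a, ('a \<times> 'a) \<times> ('a \<times> 'a) \<times> 'a \<times> 'a) cat" where
  "Pt C = \<lparr> Obj = {(f, s). split_epi C f s},
     Arr = {(P, Q, a, b). split_epi C (fst P) (snd P) \<and> split_epi C (fst Q) (snd Q) \<and>
              a \<in> hom C (Dom C (fst P)) (Dom C (fst Q)) \<and>
              b \<in> hom C (Cod C (fst P)) (Cod C (fst Q)) \<and>
              Cmp C (fst Q) a = Cmp C b (fst P) \<and>
              Cmp C a (snd P) = Cmp C (snd Q) b},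
     Dom = (\<lambda>(P, Q, a, b). P),
     Cod = (\<lambda>(P, Q, a, b). Q),
     Cmp = (\<lambda>(Q', R, a', b') (P, Q, a, b). (P, R, Cmp C a' a, Cmp C b' b)),
     Idn = (\<lambda>P. (P, P, Idn C (Dom C (fst P)), Idn C (Cod C (fst P)))) \<rparr>"

definition class_of_split_epis :: "('o, 'a, 'm) cat_scheme \<Rightarrow> ('a \<times> 'a) set \<Rightarrow> bool" where
  "class_of_split_epis C \<Sigma> \<longleftrightarrow> (\<forall>(f, s) \<in> \<Sigma>. split_epi C f s)"

definition fibrational :: "('o, 'a, 'm) cat_scheme \<Rightarrow> ('a \<times> 'a) set \<Rightarrow> bool" where
  "fibrational C \<Sigma> \<longleftrightarrow>
     (\<forall>f s. split_epi C f s \<and> iso C f \<longrightarrow> (f, s) \<in> \<Sigma>) \<and>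
     (\<forall>f s y x f' s'. (f, s) \<in> \<Sigma> \<and> y \<in> Arr C \<and> Cod C y = Cod C f \<and>
        is_pullback C f y x f' \<and> s' \<in> hom C (Dom C y) (Dom C x) \<and>
        Cmp C f' s' = Idn C (Dom C y) \<and> Cmp C x s' = Cmp C s y \<longrightarrow> (f', s') \<in> \<Sigma>)"

definition point_congruous :: "('o, 'a, 'm) cat_scheme \<Rightarrow> ('a \<times> 'a) set \<Rightarrow> bool" where
  "point_congruous C \<Sigma> \<longleftrightarrow> fibrational C \<Sigma> \<and>
     (\<forall>D L lam. finite_diagram (Pt C) D \<and> (\<forall>v \<in> Vtx D. DObj D v \<in> \<Sigma>) \<and>
        is_limit (Pt C) D L lam \<longrightarrow> L \<in> \<Sigma>)"

definition jointly_extremally_epic :: "('o, 'a, 'm) cat_scheme \<Rightarrow> 'a \<Rightarrow> 'a \<Rightarrow> bool" where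
  "jointly_extremally_epic C u v \<longleftrightarrow> u \<in> Arr C \<and> v \<in> Arr C \<and> Cod C u = Cod C v \<and>
     (\<forall>m u' v'. mono C m \<and> Cod C m = Cod C u \<and>
        u' \<in> hom C (Dom C u) (Dom C m) \<and> v' \<in> hom C (Dom C v) (Dom C m) \<and>
        Cmp C m u' = u \<and> Cmp C m v' = v \<longrightarrow> iso C m)"

text \<open>Sigma-Mal'tsev. X' is a pullback of f : X -> Y along g : Y' -> Y with projections
  x : X' -> X and f'' : X' -> Y'; s' = (1, s g) and tb = (t f, 1).\<close>

definition Sigma_Maltsev :: "('o, 'a, 'm) cat_scheme \<Rightarrow> ('a \<times> 'a) set \<Rightarrow> bool" where
  "Sigma_Maltsev C \<Sigma> \<longleftrightarrow>
     (\<forall>f s g t x f'' s' tb. (f, s) \<in> \<Sigma> \<and> split_epi C g t \<and> Cod C g = Cod C f \<and>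
        is_pullback C f g x f'' \<and>
        s' \<in> hom C (Dom C g) (Dom C x) \<and> Cmp C f'' s' = Idn C (Dom C g) \<and> Cmp C x s' = Cmp C s g \<and>
        tb \<in> hom C (Dom C f) (Dom C x) \<and> Cmp C f'' tb = Cmp C t f \<and> Cmp C x tb = Idn C (Dom C f)
        \<longrightarrow> jointly_extremally_epic C s' tb)"

definition strongly_split :: "('o, 'a, 'm) cat_scheme \<Rightarrow> 'a \<Rightarrow> 'a \<Rightarrow> bool" where
  "strongly_split C f s \<longleftrightarrow> split_epi C f s \<and>
     (\<forall>y x f'. y \<in> Arr C \<and> Cod C y = Cod C f \<and> is_pullback C f y x f' \<longrightarrow>
        jointly_extremally_epic C x s)"

definition Sigma_protomodular :: "('o, 'a, 'm) cat_scheme \<Rightarrow> ('a \<times> 'a) set \<Rightarrow> bool" where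
  "Sigma_protomodular C \<Sigma> \<longleftrightarrow> (\<forall>(f, s) \<in> \<Sigma>. strongly_split C f s)"

definition Sigma_over :: "('o, 'a, 'm) cat_scheme \<Rightarrow> ('a \<times> 'a) set \<Rightarrow> 'o \<Rightarrow>
    ('a \<times> 'a, ('a \<times> 'a) \<times> ('a \<times> 'a) \<times> 'a) cat" where
  "Sigma_over C \<Sigma> Y = \<lparr> Obj = {P \<in> \<Sigma>. Cod C (fst P) = Y},
     Arr = {(P, Q, a). P \<in> \<Sigma> \<and> Cod C (fst P) = Y \<and> Q \<in> \<Sigma> \<and> Cod C (fst Q) = Y \<and>
              a \<in> hom C (Dom C (fst P)) (Dom C (fst Q)) \<and>
              Cmp C (fst Q) a = fst P \<and> Cmp C a (snd P) = snd Q},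
     Dom = (\<lambda>(P, Q, a). P),
     Cod = (\<lambda>(P, Q, a). Q),
     Cmp = (\<lambda>(Q', R, a') (P, Q, a). (P, R, Cmp C a' a)),
     Idn = (\<lambda>P. (P, P, Idn C (Dom C (fst P)))) \<rparr>"

definition pb_data :: "('o, 'a, 'm) cat_scheme \<Rightarrow> 'a \<Rightarrow> 'a \<Rightarrow> 'a \<times> 'a" where
  "pb_data C f y = (SOME (x, f'). is_pullback C f y x f')"

definition bc_obj :: "('o, 'a, 'm) cat_scheme \<Rightarrow> 'a \<Rightarrow> 'a \<times> 'a \<Rightarrow> 'a \<times> 'a" where
  "bc_obj C y P = (case pb_data C (fst P) y of (x, f') \<Rightarrow>
     (f', THE s'. s' \<in> hom C (Dom C y) (Dom C x) \<and> Cmp C f' s' = Idn C (Dom C y) \<and>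
                  Cmp C x s' = Cmp C (snd P) y))"

definition base_change :: "('o, 'a, 'm) cat_scheme \<Rightarrow> 'a \<Rightarrow>
    ('a \<times> 'a) \<times> ('a \<times> 'a) \<times> 'a \<Rightarrow> ('a \<times> 'a) \<times> ('a \<times> 'a) \<times> 'a" where
  "base_change C y A = (case A of (P, Q, a) \<Rightarrow>
     (case pb_data C (fst P) y of (x1, f1) \<Rightarrow>
      case pb_data C (fst Q) y of (x2, f2) \<Rightarrow>
       (bc_obj C y P, bc_obj C y Q,
        THE m. m \<in> hom C (Dom C x1) (Dom C x2) \<and> Cmp C f2 m = f1 \<and> Cmp C x2 m = Cmp C a x1)))"

definition conservative :: "('o1, 'a1, 'm1) cat_scheme \<Rightarrow> ('o2, 'a2, 'm2) cat_scheme \<Rightarrow>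
    ('a1 \<Rightarrow> 'a2) \<Rightarrow> bool" where
  "conservative A B F \<longleftrightarrow> (\<forall>a \<in> Arr A. iso B (F a) \<longrightarrow> iso A a)"

end

theory Submission
  imports Defs
begin

lemma hom_iff: "f \<in> hom C X Y \<longleftrightarrow> f \<in> Arr C \<and> Dom C f = X \<and> Cod C f = Y"
  by (simp add: hom_def)

lemma homI: "f \<in> Arr C \<Longrightarrow> f \<in> hom C (Dom C f) (Cod C f)"
  by (simp add: hom_def)

lemma catD:
  assumes "category C"
  shows "\<And>f. f \<in> Arr C \<Longrightarrow> Dom C f \<in> Obj C"
    "\<And>f. f \<in> Arr C \<Longrightarrow> Cod C f \<in> Obj C"
    "\<And>X. X \<in> Obj C \<Longrightarrow> Idn C X \<in> hom C X X"
    "\<And>f g. f \<in> Arr C \<Longrightarrow> g \<in> Arr C \<Longrightarrow> Cod C f = Dom C g \<Longrightarrow> Cmp C g f \<in> hom C (Dom C f) (Cod C g)"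
    "\<And>f. f \<in> Arr C \<Longrightarrow> Cmp C f (Idn C (Dom C f)) = f"
    "\<And>f. f \<in> Arr C \<Longrightarrow> Cmp C (Idn C (Cod C f)) f = f"
    "\<And>f g h. f \<in> Arr C \<Longrightarrow> g \<in> Arr C \<Longrightarrow> h \<in> Arr C \<Longrightarrow> Cod C f = Dom C g \<Longrightarrow> Cod C g = Dom C h \<Longrightarrow>
        Cmp C h (Cmp C g f) = Cmp C (Cmp C h g) f"
  using assms unfolding category_def by simp_all

lemma comp_hom:
  assumes cat: "category C" and f: "f \<in> hom C X Y" and g: "g \<in> hom C Y Z"
  shows "Cmp C g f \<in> hom C X Z"
proof -
  have f': "f \<in> Arr C" "Dom C f = X" "Cod C f = Y" using f unfolding hom_def by auto
  have g': "g \<in> Arr C" "Dom C g = Y" "Cod C g = Z" using g unfolding hom_def by auto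
  have "Cmp C g f \<in> hom C (Dom C f) (Cod C g)" using catD(4)[OF cat f'(1) g'(1)] f'(3) g'(2) by simp
  then show ?thesis using f'(2) g'(3) by simp
qed

lemma assoc:
  assumes cat: "category C" and f: "f \<in> hom C W X" and g: "g \<in> hom C X Y" and h: "h \<in> hom C Y Z"
  shows "Cmp C h (Cmp C g f) = Cmp C (Cmp C h g) f"
proof -
  have f': "f \<in> Arr C" "Cod C f = X" using f unfolding hom_def by auto
  have g': "g \<in> Arr C" "Dom C g = X" "Cod C g = Y" using g unfolding hom_def by auto
  have h': "h \<in> Arr C" "Dom C h = Y" using h unfolding hom_def by auto
  show ?thesis using catD(7)[OF cat f'(1) g'(1) h'(1)] f'(2) g'(2,3) h'(2) by simp
qed

lemma id_hom: "category C \<Longrightarrow> X \<in> Obj C \<Longrightarrow> Idn C X \<in> hom C X X"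
  by (rule catD(3))

lemma idl:
  assumes cat: "category C" and f: "f \<in> hom C X Y"
  shows "Cmp C (Idn C Y) f = f"
proof -
  have f': "f \<in> Arr C" "Cod C f = Y" using f unfolding hom_def by auto
  show ?thesis using catD(6)[OF cat f'(1)] f'(2) by simp
qed

lemma idr:
  assumes cat: "category C" and f: "f \<in> hom C X Y"
  shows "Cmp C f (Idn C X) = f"
proof -
  have f': "f \<in> Arr C" "Dom C f = X" using f unfolding hom_def by auto
  show ?thesis using catD(5)[OF cat f'(1)] f'(2) by simp
qed

lemma dom_obj:
  assumes cat: "category C" and f: "f \<in> hom C X Y"
  shows "X \<in> Obj C"
proof -
  have f': "f \<in> Arr C" "Dom C f = X" using f unfolding hom_def by auto
  show ?thesis using catD(1)[OF cat f'(1)] f'(2) by simp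
qed

lemma cod_obj:
  assumes cat: "category C" and f: "f \<in> hom C X Y"
  shows "Y \<in> Obj C"
proof -
  have f': "f \<in> Arr C" "Cod C f = Y" using f unfolding hom_def by auto
  show ?thesis using catD(2)[OF cat f'(1)] f'(2) by simp
qed

lemma pbD:
  assumes "is_pullback C f g p q"
  shows "f \<in> hom C (Dom C f) (Cod C f)" "g \<in> hom C (Dom C g) (Cod C f)"
    "p \<in> hom C (Dom C p) (Dom C f)" "q \<in> hom C (Dom C p) (Dom C g)"
    "Cmp C f p = Cmp C g q"
  using assms unfolding is_pullback_def hom_def by auto

lemma pb_uniq:
  assumes "is_pullback C f g p q" "category C"
    and "m1 \<in> hom C W (Dom C p)" "m2 \<in> hom C W (Dom C p)"
    and "Cmp C p m1 = Cmp C p m2" "Cmp C q m1 = Cmp C q m2"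
  shows "m1 = m2"
proof -
  note D = pbD[OF assms(1)]
  have u: "Cmp C p m1 \<in> hom C W (Dom C f)" using comp_hom[OF assms(2) assms(3) D(3)] .
  have v: "Cmp C q m1 \<in> hom C W (Dom C g)" using comp_hom[OF assms(2) assms(3) D(4)] .
  have e: "Cmp C f (Cmp C p m1) = Cmp C g (Cmp C q m1)"
    using assoc[OF assms(2) assms(3) D(3) D(1)] assoc[OF assms(2) assms(3) D(4) D(2)] D(5) by simp
  from assms(1) u v e have "\<exists>!m. m \<in> hom C W (Dom C p) \<and> Cmp C p m = Cmp C p m1 \<and> Cmp C q m = Cmp C q m1"
    unfolding is_pullback_def by blast
  then show ?thesis using assms(3,4,5,6) by metis
qed

lemma pb_med:
  assumes "is_pullback C f g p q"
    and "u \<in> hom C W (Dom C f)" "v \<in> hom C W (Dom C g)" "Cmp C f u = Cmp C g v"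
  obtains m where "m \<in> hom C W (Dom C p)" "Cmp C p m = u" "Cmp C q m = v"
  using assms unfolding is_pullback_def by blast

lemma pb_exists:
  fixes C :: "('o, 'a, 'm) cat_scheme"
  assumes cat: "category C" and fc: "finitely_complete C"
    and f: "f \<in> Arr C" and g: "g \<in> Arr C" and e: "Cod C f = Cod C g"
  shows "\<exists>p q. is_pullback C f g p q"
proof -
  define D :: "('o, 'a) diagram" where "D = \<lparr> Vtx = {0,1,2}, Edg = {0,1},
     Src = (\<lambda>e. if e = 0 then 0 else 1), Tgt = (\<lambda>e. 2),
     DObj = (\<lambda>v. if v = 0 then Dom C f else if v = 1 then Dom C g else Cod C f),
     DArr = (\<lambda>e. if e = 0 then f else g) \<rparr>"
  have fo: "Dom C f \<in> Obj C" "Cod C f \<in> Obj C" "Dom C g \<in> Obj C"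
    using cat f g unfolding category_def by auto
  have "finite_diagram C D" unfolding finite_diagram_def D_def using fo f g e
    by (auto simp: hom_def)
  then obtain L lam where lim: "is_limit C D L lam" using fc unfolding finitely_complete_def by blast
  have cone: "is_cone C D L lam" using lim unfolding is_limit_def by blast
  have l0: "lam 0 \<in> hom C L (Dom C f)" and l1: "lam 1 \<in> hom C L (Dom C g)"
    and l2: "lam 2 \<in> hom C L (Cod C f)"
    and c0: "Cmp C f (lam 0) = lam 2" and c1: "Cmp C g (lam 1) = lam 2"
    using cone unfolding is_cone_def D_def by auto
  have "is_pullback C f g (lam 0) (lam 1)"
    unfolding is_pullback_def
  proof (intro conjI allI impI)
    show "f \<in> Arr C" "g \<in> Arr C" "Cod C f = Cod C g" by fact+
    have dl: "Dom C (lam 0) = L" using l0 by (simp add: hom_def)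
    show "lam 0 \<in> hom C (Dom C (lam 0)) (Dom C f)" "lam 1 \<in> hom C (Dom C (lam 0)) (Dom C g)"
      using l0 l1 dl by auto
    show "Cmp C f (lam 0) = Cmp C g (lam 1)" using c0 c1 by simp
    fix W u v assume uv: "u \<in> hom C W (Dom C f) \<and> v \<in> hom C W (Dom C g) \<and> Cmp C f u = Cmp C g v"
    define mu where "mu = (\<lambda>n::nat. if n = 0 then u else if n = 1 then v else Cmp C f u)"
    have fh: "f \<in> hom C (Dom C f) (Cod C f)" and gh: "g \<in> hom C (Dom C g) (Cod C f)"
      using f g e by (auto simp: hom_def)
    have mc: "is_cone C D W mu"
      unfolding is_cone_def D_def mu_def using uv dom_obj[OF cat] comp_hom[OF cat _ fh] comp_hom[OF cat _ gh] by auto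
    then obtain m where m: "m \<in> hom C W L" "\<forall>v\<in>Vtx D. Cmp C (lam v) m = mu v"
      and un: "\<And>m'. m' \<in> hom C W L \<Longrightarrow> (\<forall>v\<in>Vtx D. Cmp C (lam v) m' = mu v) \<Longrightarrow> m' = m"
      using lim unfolding is_limit_def by metis
    show "\<exists>!m. m \<in> hom C W (Dom C (lam 0)) \<and> Cmp C (lam 0) m = u \<and> Cmp C (lam 1) m = v"
    proof
      show "m \<in> hom C W (Dom C (lam 0)) \<and> Cmp C (lam 0) m = u \<and> Cmp C (lam 1) m = v"
        using m dl unfolding D_def mu_def by auto
    next
      fix m' assume h: "m' \<in> hom C W (Dom C (lam 0)) \<and> Cmp C (lam 0) m' = u \<and> Cmp C (lam 1) m' = v"
      have "Cmp C (lam 2) m' = Cmp C f u"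
        using h c0 assoc[OF cat _ l0 fh, of m' W] dl by auto
      then have "\<forall>v\<in>Vtx D. Cmp C (lam v) m' = mu v" using h unfolding D_def mu_def by auto
      then show "m' = m" using un h dl by auto
    qed
  qed
  then show ?thesis by blast
qed

lemma pb_data_ok:
  assumes "category C" "finitely_complete C" "f \<in> Arr C" "g \<in> Arr C" "Cod C f = Cod C g"
  shows "is_pullback C f g (fst (pb_data C f g)) (snd (pb_data C f g))"
proof -
  from pb_exists[OF assms] obtain p q where "is_pullback C f g p q" by blast
  then have "\<exists>pq. case pq of (x, f') \<Rightarrow> is_pullback C f g x f'" by auto
  then have "case pb_data C f g of (x, f') \<Rightarrow> is_pullback C f g x f'"
    unfolding pb_data_def by (rule someI_ex)
  then show ?thesis by (simp add: case_prod_beta)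
qed

lemma jee_sym: "jointly_extremally_epic C u v \<Longrightarrow> jointly_extremally_epic C v u"
  unfolding jointly_extremally_epic_def by metis

lemma part1:
  assumes cat: "category C" and fib: "fibrational C \<Sigma>" and pm: "Sigma_protomodular C \<Sigma>"
  shows "Sigma_Maltsev C \<Sigma>"
  unfolding Sigma_Maltsev_def
proof (intro allI impI)
  fix f s g t x f'' s' tb
  assume H: "(f, s) \<in> \<Sigma> \<and> split_epi C g t \<and> Cod C g = Cod C f \<and>
        is_pullback C f g x f'' \<and>
        s' \<in> hom C (Dom C g) (Dom C x) \<and> Cmp C f'' s' = Idn C (Dom C g) \<and> Cmp C x s' = Cmp C s g \<and>
        tb \<in> hom C (Dom C f) (Dom C x) \<and> Cmp C f'' tb = Cmp C t f \<and> Cmp C x tb = Idn C (Dom C f)"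
  then have pb: "is_pullback C f g x f''" by blast
  note D = pbD[OF pb]
  define X' where "X' = Dom C x"
  have fh: "f \<in> hom C (Dom C f) (Cod C f)" and gh: "g \<in> hom C (Dom C g) (Cod C f)"
    and xh: "x \<in> hom C X' (Dom C f)" and f''h: "f'' \<in> hom C X' (Dom C g)"
    and sq: "Cmp C f x = Cmp C g f''" using D X'_def by auto
  have th: "t \<in> hom C (Cod C f) (Dom C g)" and gt: "Cmp C g t = Idn C (Cod C f)"
    using H unfolding split_epi_def by auto
  have tbh: "tb \<in> hom C (Dom C f) X'" and c1: "Cmp C f'' tb = Cmp C t f"
    and c2: "Cmp C x tb = Idn C (Dom C f)" using H X'_def by auto
  have inS: "(f'', s') \<in> \<Sigma>"
  proof -
    have gA: "g \<in> Arr C" using gh by (simp add: hom_def)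
    have "\<forall>f s y x f' s'. (f, s) \<in> \<Sigma> \<and> y \<in> Arr C \<and> Cod C y = Cod C f \<and>
        is_pullback C f y x f' \<and> s' \<in> hom C (Dom C y) (Dom C x) \<and>
        Cmp C f' s' = Idn C (Dom C y) \<and> Cmp C x s' = Cmp C s y \<longrightarrow> (f', s') \<in> \<Sigma>"
      using fib unfolding fibrational_def by blast
    then show ?thesis using H gA by blast
  qed
  then have ss: "strongly_split C f'' s'" using pm unfolding Sigma_protomodular_def by blast
  have pb2: "is_pullback C f'' t tb f"
    unfolding is_pullback_def
  proof (intro conjI allI impI)
    show "f'' \<in> Arr C" "t \<in> Arr C" using f''h th by (auto simp: hom_def)
    show "Cod C f'' = Cod C t" using f''h th by (auto simp: hom_def)
    show "tb \<in> hom C (Dom C tb) (Dom C f'')" "f \<in> hom C (Dom C tb) (Dom C t)"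
      using tbh f''h th fh by (auto simp: hom_def)
    show "Cmp C f'' tb = Cmp C t f" by fact
    fix W u v assume uv: "u \<in> hom C W (Dom C f'') \<and> v \<in> hom C W (Dom C t) \<and> Cmp C f'' u = Cmp C t v"
    have uh: "u \<in> hom C W X'" and vh: "v \<in> hom C W (Cod C f)" and e: "Cmp C f'' u = Cmp C t v"
      using uv f''h th by (auto simp: hom_def)
    have xu: "Cmp C x u \<in> hom C W (Dom C f)" using comp_hom[OF cat uh xh] .
    have fxu: "Cmp C f (Cmp C x u) = v"
    proof -
      have "Cmp C f (Cmp C x u) = Cmp C (Cmp C f x) u" using assoc[OF cat uh xh fh] .
      also have "\<dots> = Cmp C g (Cmp C f'' u)" using sq assoc[OF cat uh f''h gh] by simp
      also have "\<dots> = Cmp C g (Cmp C t v)" using e by simp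
      also have "\<dots> = Cmp C (Idn C (Cod C f)) v" using assoc[OF cat vh th gh] gt by simp
      also have "\<dots> = v" using idl[OF cat vh] .
      finally show ?thesis .
    qed
    have tbxu: "Cmp C tb (Cmp C x u) = u"
    proof (rule pb_uniq[OF pb cat])
      show "Cmp C tb (Cmp C x u) \<in> hom C W (Dom C x)" using comp_hom[OF cat xu tbh] X'_def by simp
      show "u \<in> hom C W (Dom C x)" using uh X'_def by simp
      show "Cmp C x (Cmp C tb (Cmp C x u)) = Cmp C x u"
        using assoc[OF cat xu tbh xh] c2 idl[OF cat xu] by simp
      have "Cmp C f'' (Cmp C tb (Cmp C x u)) = Cmp C (Cmp C t f) (Cmp C x u)"
        using assoc[OF cat xu tbh f''h] c1 by simp
      also have "\<dots> = Cmp C t v" using assoc[OF cat xu fh th] fxu by simp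
      finally show "Cmp C f'' (Cmp C tb (Cmp C x u)) = Cmp C f'' u" using e by simp
    qed
    show "\<exists>!m. m \<in> hom C W (Dom C tb) \<and> Cmp C tb m = u \<and> Cmp C f m = v"
    proof
      show "Cmp C x u \<in> hom C W (Dom C tb) \<and> Cmp C tb (Cmp C x u) = u \<and> Cmp C f (Cmp C x u) = v"
        using xu tbh tbxu fxu by (auto simp: hom_def)
    next
      fix m assume m: "m \<in> hom C W (Dom C tb) \<and> Cmp C tb m = u \<and> Cmp C f m = v"
      then have mh: "m \<in> hom C W (Dom C f)" using tbh by (auto simp: hom_def)
      have "Cmp C x u = Cmp C (Cmp C x tb) m" using assoc[OF cat mh tbh xh] m by simp
      then show "m = Cmp C x u" using c2 idl[OF cat mh] by simp
    qed
  qed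
  have "y \<in> Arr C \<and> Cod C y = Cod C f'' \<and> is_pullback C f'' y x' f' \<longrightarrow> jointly_extremally_epic C x' s'"
    for y x' f' using ss unfolding strongly_split_def by blast
  then have "jointly_extremally_epic C tb s'"
    using pb2 th f''h by (auto simp: hom_def)
  then show "jointly_extremally_epic C s' tb" by (rule jee_sym)
qed

lemma comp_arr: "category C \<Longrightarrow> f \<in> Arr C \<Longrightarrow> g \<in> Arr C \<Longrightarrow> Cod C f = Dom C g \<Longrightarrow> Cmp C g f \<in> Arr C"
  using catD(4)[of C f g] unfolding hom_def by blast
lemma dom_comp: "category C \<Longrightarrow> f \<in> Arr C \<Longrightarrow> g \<in> Arr C \<Longrightarrow> Cod C f = Dom C g \<Longrightarrow> Dom C (Cmp C g f) = Dom C f"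
  using catD(4)[of C f g] unfolding hom_def by blast
lemma cod_comp: "category C \<Longrightarrow> f \<in> Arr C \<Longrightarrow> g \<in> Arr C \<Longrightarrow> Cod C f = Dom C g \<Longrightarrow> Cod C (Cmp C g f) = Cod C g"
  using catD(4)[of C f g] unfolding hom_def by blast
lemma assoc_r: "category C \<Longrightarrow> f \<in> Arr C \<Longrightarrow> g \<in> Arr C \<Longrightarrow> h \<in> Arr C \<Longrightarrow> Cod C f = Dom C g \<Longrightarrow> Cod C g = Dom C h \<Longrightarrow>
   Cmp C (Cmp C h g) f = Cmp C h (Cmp C g f)"
  using catD(7)[of C f g h] by argo
lemma idl': "category C \<Longrightarrow> f \<in> Arr C \<Longrightarrow> Cod C f = Y \<Longrightarrow> Cmp C (Idn C Y) f = f"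
  using catD(6)[of C f] by blast
lemma idr': "category C \<Longrightarrow> f \<in> Arr C \<Longrightarrow> Dom C f = X \<Longrightarrow> Cmp C f (Idn C X) = f"
  using catD(5)[of C f] by blast
lemma idn_arr: "category C \<Longrightarrow> X \<in> Obj C \<Longrightarrow> Idn C X \<in> Arr C"
  using catD(3)[of C X] unfolding hom_def by blast
lemma idn_dom: "category C \<Longrightarrow> X \<in> Obj C \<Longrightarrow> Dom C (Idn C X) = X"
  using catD(3)[of C X] unfolding hom_def by blast
lemma idn_cod: "category C \<Longrightarrow> X \<in> Obj C \<Longrightarrow> Cod C (Idn C X) = X"
  using catD(3)[of C X] unfolding hom_def by blast
lemma lift: "category C \<Longrightarrow> Cmp C g f = k \<Longrightarrow> f \<in> Arr C \<Longrightarrow> g \<in> Arr C \<Longrightarrow> Cod C f = Dom C g \<Longrightarrow>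
   z \<in> Arr C \<Longrightarrow> Cod C z = Dom C f \<Longrightarrow> Cmp C g (Cmp C f z) = Cmp C k z"
proof -
  assume a: "category C" "Cmp C g f = k" "f \<in> Arr C" "g \<in> Arr C" "Cod C f = Dom C g" "z \<in> Arr C" "Cod C z = Dom C f"
  have "Cmp C (Cmp C g f) z = Cmp C g (Cmp C f z)" by (rule assoc_r) (use a in auto)
  then show ?thesis using a(2) by simp
qed

lemmas cs = comp_arr dom_comp cod_comp assoc_r idl' idr' idn_arr idn_dom idn_cod

lemma Pt_arr: "(P, Q, a, b) \<in> Arr (Pt C) \<longleftrightarrow> split_epi C (fst P) (snd P) \<and> split_epi C (fst Q) (snd Q) \<and>
              a \<in> hom C (Dom C (fst P)) (Dom C (fst Q)) \<and>
              b \<in> hom C (Cod C (fst P)) (Cod C (fst Q)) \<and>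
              Cmp C (fst Q) a = Cmp C b (fst P) \<and>
              Cmp C a (snd P) = Cmp C (snd Q) b"
  by (simp add: Pt_def)

lemma Pt_hom_elim: "z \<in> hom (Pt C) X Y \<Longrightarrow> \<exists>a b. z = (X, Y, a, b) \<and> (X, Y, a, b) \<in> Arr (Pt C)"
  by (cases z) (auto simp: hom_def Pt_def)

lemma Pt_homI: "(X, Y, a, b) \<in> Arr (Pt C) \<Longrightarrow> (X, Y, a, b) \<in> hom (Pt C) X Y"
  by (simp add: hom_def Pt_def)

lemma Pt_cmp: "Cmp (Pt C) (Q', R, a', b') (P, Q, a, b) = (P, R, Cmp C a' a, Cmp C b' b)"
  by (simp add: Pt_def)

lemma Pt_obj: "P \<in> Obj (Pt C) \<longleftrightarrow> split_epi C (fst P) (snd P)"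
  by (cases P) (simp add: Pt_def)

lemma kp_sigma:
  fixes C :: "('o, 'a, 'm) cat_scheme"
  assumes cat: "category C" and pc: "point_congruous C \<Sigma>"
    and P: "(f, s) \<in> \<Sigma>" and Q: "(g, t) \<in> \<Sigma>"
    and sf: "split_epi C f s" and sg: "split_epi C g t"
    and ah: "a \<in> hom C (Dom C f) (Dom C g)" and ga: "Cmp C g a = f" and as: "Cmp C a s = t"
    and ef: "Cod C f = Y" and eg: "Cod C g = Y"
    and pbK: "is_pullback C a a p1 p2"
    and dh: "d \<in> hom C (Dom C f) (Dom C p1)" and d1: "Cmp C p1 d = Idn C (Dom C f)"
    and d2: "Cmp C p2 d = Idn C (Dom C f)"
  shows "(Cmp C f p1, Cmp C d s) \<in> \<Sigma>"
proof -
  note K = pbD[OF pbK]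
  have Yo: "Y \<in> Obj C" using cat sf ef unfolding category_def split_epi_def by blast
  have Dfo: "Dom C f \<in> Obj C" using dom_obj[OF cat ah] .
  have base: "f \<in> Arr C" "g \<in> Arr C" "a \<in> Arr C" "p1 \<in> Arr C" "p2 \<in> Arr C" "d \<in> Arr C"
     "s \<in> Arr C" "t \<in> Arr C"
    "Dom C a = Dom C f" "Cod C a = Dom C g" "Dom C s = Y" "Cod C s = Dom C f"
    "Dom C t = Y" "Cod C t = Dom C g" "Cod C p1 = Dom C f" "Dom C p2 = Dom C p1" "Cod C p2 = Dom C f"
    "Dom C d = Dom C f" "Cod C d = Dom C p1"
    using sf sg ah K dh ef eg unfolding split_epi_def hom_def by auto
  have fs: "Cmp C f s = Idn C Y" and gt: "Cmp C g t = Idn C Y"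
    using sf sg ef eg unfolding split_epi_def by auto
  have ap: "Cmp C a p2 = Cmp C a p1" using K(5) by simp
  have fp: "Cmp C f p2 = Cmp C f p1"
  proof -
    have "Cmp C (Cmp C g a) p2 = Cmp C (Cmp C g a) p1"
      using assoc_r[OF cat, of p2 a g] assoc_r[OF cat, of p1 a g] ap base eg by simp
    then show ?thesis using ga by simp
  qed
  note L1 = lift[OF cat fp] lift[OF cat ga] lift[OF cat as] lift[OF cat fs] lift[OF cat gt] lift[OF cat ap]
     lift[OF cat d1] lift[OF cat d2]
  note S = base ef eg Yo Dfo cat cs[OF cat] L1 ga as fs gt ap d1 d2 fp
  define I where "I = Idn C Y"
  define Pp where "Pp = (f, s)"
  define Qp where "Qp = (g, t)"
  define L where "L = (Cmp C f p1, Cmp C d s)"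
  define D where "D = \<lparr> Vtx = {0,1,2}, Edg = {0,1}, Src = (\<lambda>e. if e = 0 then 0 else 2), Tgt = (\<lambda>e. 1),
       DObj = (\<lambda>v. if v = 1 then Qp else Pp), DArr = (\<lambda>e::nat. (Pp, Qp, a, I)) \<rparr>"
  define lam where "lam = (\<lambda>v::nat. if v = 0 then (L, Pp, p1, I) else if v = 1 then (L, Qp, Cmp C a p1, I)
       else (L, Pp, p2, I))"
  have arrA: "(Pp, Qp, a, I) \<in> Arr (Pt C)"
    unfolding Pt_arr Pp_def Qp_def I_def using sf sg by (simp add: hom_def S)
  have Lobj: "split_epi C (Cmp C f p1) (Cmp C d s)"
    unfolding split_epi_def hom_def by (simp add: S)
  have fd: "finite_diagram (Pt C) D"
    unfolding finite_diagram_def D_def using arrA sf sg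
    by (auto simp: Pt_obj Pp_def Qp_def intro: Pt_homI)
  have l0: "(L, Pp, p1, I) \<in> Arr (Pt C)"
    unfolding Pt_arr Pp_def L_def I_def using Lobj sf by (simp add: hom_def S)
  have l1: "(L, Qp, Cmp C a p1, I) \<in> Arr (Pt C)"
    unfolding Pt_arr Qp_def L_def I_def using Lobj sg by (simp add: hom_def S)
  have l2: "(L, Pp, p2, I) \<in> Arr (Pt C)"
    unfolding Pt_arr Pp_def L_def I_def using Lobj sf by (simp add: hom_def S)
  have cone: "is_cone (Pt C) D L lam"
    unfolding is_cone_def
  proof (intro conjI ballI)
    show "L \<in> Obj (Pt C)" using Lobj by (simp add: Pt_obj L_def)
    fix v assume "v \<in> Vtx D"
    then show "lam v \<in> hom (Pt C) L (DObj D v)"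
      using l0 l1 l2 by (auto simp: D_def lam_def intro: Pt_homI)
  next
    fix e assume "e \<in> Edg D"
    then show "Cmp (Pt C) (DArr D e) (lam (Src D e)) = lam (Tgt D e)"
      by (auto simp: D_def lam_def Pt_cmp I_def S)
  qed
  have lim: "is_limit (Pt C) D L lam"
    unfolding is_limit_def
  proof (intro conjI allI impI)
    show "is_cone (Pt C) D L lam" by fact
    fix M mu assume mc: "is_cone (Pt C) D M mu"
    obtain fM sM where Me: "M = (fM, sM)" by (cases M)
    have sM: "split_epi C fM sM" using mc Me unfolding is_cone_def by (simp add: Pt_obj)
    have mu0: "mu 0 \<in> hom (Pt C) M Pp" and mu1: "mu 1 \<in> hom (Pt C) M Qp" and mu2: "mu 2 \<in> hom (Pt C) M Pp"
      using mc unfolding is_cone_def D_def by auto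
    obtain u0 b0 where e0: "mu 0 = (M, Pp, u0, b0)" and a0: "(M, Pp, u0, b0) \<in> Arr (Pt C)"
      using Pt_hom_elim[OF mu0] by blast
    obtain u1 b1 where e1: "mu 1 = (M, Qp, u1, b1)"
      using Pt_hom_elim[OF mu1] by blast
    obtain u2 b2 where e2: "mu 2 = (M, Pp, u2, b2)" and a2: "(M, Pp, u2, b2) \<in> Arr (Pt C)"
      using Pt_hom_elim[OF mu2] by blast
    have ed0: "Cmp (Pt C) (Pp, Qp, a, I) (mu 0) = mu 1" and ed1: "Cmp (Pt C) (Pp, Qp, a, I) (mu 2) = mu 1"
      using mc unfolding is_cone_def D_def by auto
    have A0: "u0 \<in> Arr C" "Dom C u0 = Dom C fM" "Cod C u0 = Dom C f" "b0 \<in> Arr C" "Dom C b0 = Cod C fM"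
      "Cod C b0 = Y" "Cmp C f u0 = Cmp C b0 fM" "Cmp C u0 sM = Cmp C s b0"
      using a0 ef unfolding Pt_arr Pp_def Me hom_def by auto
    have A2: "u2 \<in> Arr C" "Dom C u2 = Dom C fM" "Cod C u2 = Dom C f" "b2 \<in> Arr C" "Dom C b2 = Cod C fM"
      "Cod C b2 = Y" "Cmp C f u2 = Cmp C b2 fM" "Cmp C u2 sM = Cmp C s b2"
      using a2 ef unfolding Pt_arr Pp_def Me hom_def by auto
    have SM: "fM \<in> Arr C" "sM \<in> Arr C" "Dom C sM = Cod C fM" "Cod C sM = Dom C fM"
      "Cmp C fM sM = Idn C (Cod C fM)"
      using sM unfolding split_epi_def hom_def by auto
    have Co: "Cod C fM \<in> Obj C" using cat SM(1) unfolding category_def by blast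
    have u1e: "u1 = Cmp C a u0" "b1 = b0" using ed0 e0 e1 A0 by (auto simp: Pt_cmp I_def S)
    have u2e: "Cmp C a u2 = Cmp C a u0" "b2 = b0" using ed1 e2 e1 u1e A2 by (auto simp: Pt_cmp I_def S)
    obtain k where kh: "k \<in> hom C (Dom C fM) (Dom C p1)" and k1: "Cmp C p1 k = u0" and k2: "Cmp C p2 k = u2"
      using pb_med[OF pbK, of u0 "Dom C fM" u2] A0 A2 u2e base by (auto simp: hom_def)
    have KK: "k \<in> Arr C" "Dom C k = Dom C fM" "Cod C k = Dom C p1" using kh by (auto simp: hom_def)
    note L2 = lift[OF cat k1] lift[OF cat k2]
    have ksM: "Cmp C k sM = Cmp C (Cmp C d s) b0"
    proof (rule pb_uniq[OF pbK cat])
      show "Cmp C k sM \<in> hom C (Cod C fM) (Dom C p1)" using KK SM by (simp add: hom_def S)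
      show "Cmp C (Cmp C d s) b0 \<in> hom C (Cod C fM) (Dom C p1)" using A0 by (simp add: hom_def S)
      show "Cmp C p1 (Cmp C k sM) = Cmp C p1 (Cmp C (Cmp C d s) b0)"
        using KK SM A0 by (simp add: S L2)
      show "Cmp C p2 (Cmp C k sM) = Cmp C p2 (Cmp C (Cmp C d s) b0)"
        using KK SM A0 A2 u2e by (simp add: S L2)
    qed
    have mA: "(M, L, k, b0) \<in> Arr (Pt C)"
      unfolding Pt_arr L_def Me using sM Lobj KK A0 ksM k1 by (simp add: hom_def S)
    show "\<exists>!m. m \<in> hom (Pt C) M L \<and> (\<forall>v\<in>Vtx D. Cmp (Pt C) (lam v) m = mu v)"
    proof
      show "(M, L, k, b0) \<in> hom (Pt C) M L \<and> (\<forall>v\<in>Vtx D. Cmp (Pt C) (lam v) (M, L, k, b0) = mu v)"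
        using mA Pt_homI[OF mA] e0 e1 e2 u1e u2e k1 k2 A0 KK
        by (auto simp: D_def lam_def Pt_cmp I_def S)
    next
      fix m assume h: "m \<in> hom (Pt C) M L \<and> (\<forall>v\<in>Vtx D. Cmp (Pt C) (lam v) m = mu v)"
      obtain k' b' where me: "m = (M, L, k', b')" and mA': "(M, L, k', b') \<in> Arr (Pt C)"
        using Pt_hom_elim h by blast
      have B: "k' \<in> Arr C" "Dom C k' = Dom C fM" "Cod C k' = Dom C p1" "b' \<in> Arr C" "Cod C b' = Y"
        using mA' unfolding Pt_arr L_def Me hom_def by (auto simp: S)
      have c0: "Cmp (Pt C) (lam 0) m = mu 0" and c2: "Cmp (Pt C) (lam 2) m = mu 2"
        using h by (auto simp: D_def)
      have r0: "Cmp C p1 k' = u0" "b' = b0" using c0 me e0 B by (auto simp: lam_def Pt_cmp I_def S)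
      have r2: "Cmp C p2 k' = u2" using c2 me e2 by (auto simp: lam_def Pt_cmp)
      have "k' = k"
        by (rule pb_uniq[OF pbK cat, of k' "Dom C fM" k]) (use B kh r0 r2 k1 k2 in \<open>auto simp: hom_def\<close>)
      then show "m = (M, L, k, b0)" using me r0 by simp
    qed
  qed
  have pc2: "\<forall>D L lam. finite_diagram (Pt C) D \<and> (\<forall>v \<in> Vtx D. DObj D v \<in> \<Sigma>) \<and>
        is_limit (Pt C) D L lam \<longrightarrow> L \<in> \<Sigma>" using pc unfolding point_congruous_def by blast
  have "\<forall>v \<in> Vtx D. DObj D v \<in> \<Sigma>" using P Q unfolding D_def Pp_def Qp_def by simp
  then have "L \<in> \<Sigma>" using pc2 fd lim by blast
  then show ?thesis by (simp add: L_def)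
qed


lemma iso_inv:
  assumes "iso C m"
  obtains m' where "m' \<in> hom C (Cod C m) (Dom C m)" "Cmp C m' m = Idn C (Dom C m)" "Cmp C m m' = Idn C (Cod C m)"
  using assms unfolding iso_def by blast

lemma core:
  fixes C :: "('o, 'a, 'm) cat_scheme"
  assumes cat: "category C" and fc: "finitely_complete C" and pc: "point_congruous C \<Sigma>"
    and pm: "Sigma_protomodular C \<Sigma>"
    and P: "(f, s) \<in> \<Sigma>" and Q: "(g, t) \<in> \<Sigma>"
    and sf: "split_epi C f s" and sg: "split_epi C g t"
    and ah: "a \<in> hom C (Dom C f) (Dom C g)" and ga: "Cmp C g a = f" and as: "Cmp C a s = t"
    and ef: "Cod C f = Y" and eg: "Cod C g = Y"
    and yh: "y \<in> hom C Y' Y"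
    and pb1: "is_pullback C f y x1 f1" and pb2: "is_pullback C g y x2 f2"
    and mh: "m \<in> hom C (Dom C x1) (Dom C x2)" and mx: "Cmp C x2 m = Cmp C a x1"
    and mf: "Cmp C f2 m = f1" and mi: "iso C m"
  shows "iso C a"
proof -
  note B1 = pbD[OF pb1] and B2 = pbD[OF pb2]
  obtain m' where m'h: "m' \<in> hom C (Dom C x2) (Dom C x1)" and m'm: "Cmp C m' m = Idn C (Dom C x1)"
    and mm': "Cmp C m m' = Idn C (Dom C x2)"
    using iso_inv[OF mi] mh by (auto simp: hom_def)
  have Yo: "Y \<in> Obj C" using cat sf ef unfolding category_def split_epi_def by blast
  have Dfo: "Dom C f \<in> Obj C" using dom_obj[OF cat ah] .
  have X1o: "Dom C x1 \<in> Obj C" using dom_obj[OF cat mh] .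
  have X2o: "Dom C x2 \<in> Obj C" using cod_obj[OF cat mh] .
  have base: "f \<in> Arr C" "g \<in> Arr C" "a \<in> Arr C" "s \<in> Arr C" "t \<in> Arr C" "y \<in> Arr C"
    "x1 \<in> Arr C" "f1 \<in> Arr C" "x2 \<in> Arr C" "f2 \<in> Arr C" "m \<in> Arr C" "m' \<in> Arr C"
    "Dom C a = Dom C f" "Cod C a = Dom C g" "Dom C s = Y" "Cod C s = Dom C f"
    "Dom C t = Y" "Cod C t = Dom C g" "Dom C y = Y'" "Cod C y = Y"
    "Cod C x1 = Dom C f" "Dom C f1 = Dom C x1" "Cod C f1 = Y'"
    "Cod C x2 = Dom C g" "Dom C f2 = Dom C x2" "Cod C f2 = Y'"
    "Dom C m = Dom C x1" "Cod C m = Dom C x2" "Dom C m' = Dom C x2" "Cod C m' = Dom C x1"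
    using sf sg ah yh B1 B2 mh m'h ef eg unfolding split_epi_def hom_def by auto
  have fs: "Cmp C f s = Idn C Y" and gt: "Cmp C g t = Idn C Y"
    using sf sg ef eg unfolding split_epi_def by auto
  obtain p1 p2 where pbK: "is_pullback C a a p1 p2"
    using pb_exists[OF cat fc, of a a] base by auto
  note K = pbD[OF pbK]
  have ap: "Cmp C a p2 = Cmp C a p1" using K(5) by simp
  have baseK: "p1 \<in> Arr C" "p2 \<in> Arr C" "Cod C p1 = Dom C f" "Dom C p2 = Dom C p1" "Cod C p2 = Dom C f"
    using K base unfolding hom_def by auto
  have fp: "Cmp C f p2 = Cmp C f p1"
  proof -
    have "Cmp C (Cmp C g a) p2 = Cmp C (Cmp C g a) p1"
      using assoc_r[OF cat, of p2 a g] assoc_r[OF cat, of p1 a g] ap base baseK by simp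
    then show ?thesis using ga by simp
  qed
  have idf: "Idn C (Dom C f) \<in> hom C (Dom C f) (Dom C a)" using id_hom[OF cat Dfo] base by simp
  obtain d where dh: "d \<in> hom C (Dom C f) (Dom C p1)" and d1: "Cmp C p1 d = Idn C (Dom C f)"
    and d2: "Cmp C p2 d = Idn C (Dom C f)"
    using pb_med[OF pbK idf idf] by blast
  have baseD: "d \<in> Arr C" "Dom C d = Dom C f" "Cod C d = Dom C p1" using dh by (auto simp: hom_def)
  have P1o: "Dom C p1 \<in> Obj C" using cod_obj[OF cat dh] .
  have RS: "(Cmp C f p1, Cmp C d s) \<in> \<Sigma>"
    by (rule kp_sigma[OF cat pc P Q sf sg ah ga as ef eg pbK dh d1 d2])
  have ssR: "strongly_split C (Cmp C f p1) (Cmp C d s)" using pm RS unfolding Sigma_protomodular_def by blast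
  note L1 = lift[OF cat fp] lift[OF cat ga] lift[OF cat as] lift[OF cat fs] lift[OF cat gt] lift[OF cat ap]
     lift[OF cat d1] lift[OF cat d2] lift[OF cat mx] lift[OF cat mf] lift[OF cat m'm]
  note S = base baseK baseD ef eg Yo Dfo X1o X2o P1o cs[OF cat] L1
  have fRA: "Cmp C f p1 \<in> Arr C" "Cod C (Cmp C f p1) = Cod C y" "Dom C (Cmp C f p1) = Dom C p1"
    by (simp_all add: S)
  obtain r fR' where pbR: "is_pullback C (Cmp C f p1) y r fR'"
    using pb_exists[OF cat fc fRA(1) base(6) fRA(2)] by blast
  note N = pbD[OF pbR]
  have baseR: "r \<in> Arr C" "Cod C r = Dom C p1" "fR' \<in> Arr C" "Dom C fR' = Dom C r" "Cod C fR' = Y'"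
    using N fRA base unfolding hom_def by auto
  have sqR: "Cmp C f (Cmp C p1 r) = Cmp C y fR'"
    using N(5) assoc_r[OF cat, of r p1 f] baseR S by simp
  have HR: "\<forall>y x f'. y \<in> Arr C \<and> Cod C y = Cod C (Cmp C f p1) \<and> is_pullback C (Cmp C f p1) y x f' \<longrightarrow>
        jointly_extremally_epic C x (Cmp C d s)"
    using ssR unfolding strongly_split_def by (rule conjunct2)
  have jee: "jointly_extremally_epic C r (Cmp C d s)"
    using HR[rule_format, of y r fR'] base(6) fRA(2) pbR by simp
  obtain q1 where q1h: "q1 \<in> hom C (Dom C r) (Dom C x1)" and q1a: "Cmp C x1 q1 = Cmp C p1 r"
    and q1b: "Cmp C f1 q1 = fR'"
  proof (rule pb_med[OF pb1])
    show "Cmp C p1 r \<in> hom C (Dom C r) (Dom C f)" using baseR by (simp add: hom_def S)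
    show "fR' \<in> hom C (Dom C r) (Dom C y)" using baseR by (simp add: hom_def S)
    show "Cmp C f (Cmp C p1 r) = Cmp C y fR'" by (rule sqR)
  qed (auto simp: base)
  obtain q2 where q2h: "q2 \<in> hom C (Dom C r) (Dom C x1)" and q2a: "Cmp C x1 q2 = Cmp C p2 r"
    and q2b: "Cmp C f1 q2 = fR'"
  proof (rule pb_med[OF pb1])
    show "Cmp C p2 r \<in> hom C (Dom C r) (Dom C f)" using baseR by (simp add: hom_def S)
    show "fR' \<in> hom C (Dom C r) (Dom C y)" using baseR by (simp add: hom_def S)
    show "Cmp C f (Cmp C p2 r) = Cmp C y fR'" using sqR baseR by (simp add: S)
  qed (auto simp: base)
  have baseQ: "q1 \<in> Arr C" "Dom C q1 = Dom C r" "Cod C q1 = Dom C x1"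
     "q2 \<in> Arr C" "Dom C q2 = Dom C r" "Cod C q2 = Dom C x1" using q1h q2h by (auto simp: hom_def)
  have mq: "Cmp C m q1 = Cmp C m q2"
  proof (rule pb_uniq[OF pb2 cat])
    show "Cmp C m q1 \<in> hom C (Dom C r) (Dom C x2)" "Cmp C m q2 \<in> hom C (Dom C r) (Dom C x2)"
      using baseQ by (simp_all add: hom_def S)
    show "Cmp C x2 (Cmp C m q1) = Cmp C x2 (Cmp C m q2)"
      using baseQ baseR q1a q2a by (simp add: S)
    show "Cmp C f2 (Cmp C m q1) = Cmp C f2 (Cmp C m q2)"
      using baseQ baseR q1b q2b by (simp add: S)
  qed
  have "Cmp C m' (Cmp C m q1) = Cmp C m' (Cmp C m q2)" using mq by simp
  then have qq: "q1 = q2" using baseQ by (simp add: S)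
  have pr: "Cmp C p1 r = Cmp C p2 r" using q1a q2a qq by simp
  have rd: "Cmp C d (Cmp C p1 r) = r"
  proof (rule pb_uniq[OF pbK cat])
    show "Cmp C d (Cmp C p1 r) \<in> hom C (Dom C r) (Dom C p1)" "r \<in> hom C (Dom C r) (Dom C p1)"
      using baseR by (simp_all add: hom_def S)
    show "Cmp C p1 (Cmp C d (Cmp C p1 r)) = Cmp C p1 r" using baseR by (simp add: S)
    show "Cmp C p2 (Cmp C d (Cmp C p1 r)) = Cmp C p2 r" using baseR pr by (simp add: S)
  qed
  have monod: "mono C d"
    unfolding mono_def
  proof (intro conjI allI impI)
    show "d \<in> Arr C" by (rule baseD(1))
    fix u v assume h: "u \<in> Arr C \<and> v \<in> Arr C \<and> Cod C u = Dom C d \<and> Cod C v = Dom C d \<and>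
        Dom C u = Dom C v \<and> Cmp C d u = Cmp C d v"
    have hu: "u \<in> Arr C" "Cod C u = Dom C f" "v \<in> Arr C" "Cod C v = Dom C f" using h baseD by auto
    have "Cmp C p1 (Cmp C d u) = u" "Cmp C p1 (Cmp C d v) = v" using hu by (simp_all add: S)
    then show "u = v" using h by metis
  qed
  have isod: "iso C d"
  proof -
    have "\<forall>m u' v'. mono C m \<and> Cod C m = Cod C r \<and>
        u' \<in> hom C (Dom C r) (Dom C m) \<and> v' \<in> hom C (Dom C (Cmp C d s)) (Dom C m) \<and>
        Cmp C m u' = r \<and> Cmp C m v' = Cmp C d s \<longrightarrow> iso C m"
      using jee unfolding jointly_extremally_epic_def by blast
    moreover have "Cmp C p1 r \<in> hom C (Dom C r) (Dom C d)" "s \<in> hom C (Dom C (Cmp C d s)) (Dom C d)"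
      using baseR by (simp_all add: hom_def S)
    ultimately have H: "\<forall>m u' v'. mono C m \<and> Cod C m = Cod C r \<and>
        u' \<in> hom C (Dom C r) (Dom C m) \<and> v' \<in> hom C (Dom C (Cmp C d s)) (Dom C m) \<and>
        Cmp C m u' = r \<and> Cmp C m v' = Cmp C d s \<longrightarrow> iso C m"
      and h1: "Cmp C p1 r \<in> hom C (Dom C r) (Dom C d)" and h2: "s \<in> hom C (Dom C (Cmp C d s)) (Dom C d)"
      by blast+
    have "mono C d \<and> Cod C d = Cod C r \<and>
        Cmp C p1 r \<in> hom C (Dom C r) (Dom C d) \<and> s \<in> hom C (Dom C (Cmp C d s)) (Dom C d) \<and>
        Cmp C d (Cmp C p1 r) = r \<and> Cmp C d s = Cmp C d s"
      using monod h1 h2 rd baseR baseD by simp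
    from H[rule_format, OF this] show ?thesis .
  qed
  obtain d' where d'h: "d' \<in> hom C (Cod C d) (Dom C d)" and dd': "Cmp C d d' = Idn C (Cod C d)"
    using iso_inv[OF isod] by blast
  have baseD': "d' \<in> Arr C" "Dom C d' = Dom C p1" "Cod C d' = Dom C f" using d'h baseD by (auto simp: hom_def)
  have x: "Cmp C p1 (Cmp C d d') = d'" "Cmp C p2 (Cmp C d d') = d'" using baseD' by (simp_all add: S)
  have dd2: "Cmp C d d' = Idn C (Dom C p1)" using dd' baseD(3) by simp
  have "Cmp C p1 (Cmp C d d') = p1" "Cmp C p2 (Cmp C d d') = p2"
    unfolding dd2 using idr'[OF cat baseK(1) refl] idr'[OF cat baseK(2) baseK(4)] by simp_all
  then have p12: "p1 = p2" using x by simp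
  have monoa: "mono C a"
    unfolding mono_def
  proof (intro conjI allI impI)
    show "a \<in> Arr C" by (rule base(3))
    fix u v assume h: "u \<in> Arr C \<and> v \<in> Arr C \<and> Cod C u = Dom C a \<and> Cod C v = Dom C a \<and>
        Dom C u = Dom C v \<and> Cmp C a u = Cmp C a v"
    obtain k where "Cmp C p1 k = u" "Cmp C p2 k = v"
      by (rule pb_med[OF pbK, of u "Dom C u" v]) (use h in \<open>auto simp: hom_def\<close>)
    then show "u = v" using p12 by simp
  qed
  have ssQ: "strongly_split C g t" using pm Q unfolding Sigma_protomodular_def by blast
  have HQ: "\<forall>y x f'. y \<in> Arr C \<and> Cod C y = Cod C g \<and> is_pullback C g y x f' \<longrightarrow>
        jointly_extremally_epic C x t"
    using ssQ unfolding strongly_split_def by (rule conjunct2)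
  have jee2: "jointly_extremally_epic C x2 t"
    using HQ[rule_format, of y x2 f2] base(6) base(20) eg pb2 by simp
  have e1: "Cmp C x2 (Cmp C m m') = Cmp C a (Cmp C x1 m')" using base by (simp add: S)
  have xm: "Cmp C x2 (Cmp C m m') = x2" unfolding mm' by (rule idr'[OF cat base(9) refl])
  have e2: "Cmp C a (Cmp C x1 m') = x2" using e1 xm by simp
  have "\<forall>m u' v'. mono C m \<and> Cod C m = Cod C x2 \<and>
        u' \<in> hom C (Dom C x2) (Dom C m) \<and> v' \<in> hom C (Dom C t) (Dom C m) \<and>
        Cmp C m u' = x2 \<and> Cmp C m v' = t \<longrightarrow> iso C m"
    using jee2 unfolding jointly_extremally_epic_def by blast
  moreover have "Cmp C x1 m' \<in> hom C (Dom C x2) (Dom C a)" "s \<in> hom C (Dom C t) (Dom C a)"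
    using base by (simp_all add: hom_def S)
  ultimately have H: "\<forall>m u' v'. mono C m \<and> Cod C m = Cod C x2 \<and>
        u' \<in> hom C (Dom C x2) (Dom C m) \<and> v' \<in> hom C (Dom C t) (Dom C m) \<and>
        Cmp C m u' = x2 \<and> Cmp C m v' = t \<longrightarrow> iso C m"
    and h1: "Cmp C x1 m' \<in> hom C (Dom C x2) (Dom C a)" and h2: "s \<in> hom C (Dom C t) (Dom C a)"
    by blast+
  have "mono C a \<and> Cod C a = Cod C x2 \<and>
        Cmp C x1 m' \<in> hom C (Dom C x2) (Dom C a) \<and> s \<in> hom C (Dom C t) (Dom C a) \<and>
        Cmp C a (Cmp C x1 m') = x2 \<and> Cmp C a s = t"
    using monoa h1 h2 e2 as base by simp
  from H[rule_format, OF this] show ?thesis .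
qed


lemma SO_arr: "(P, Q, a) \<in> Arr (Sigma_over C \<Sigma> Y) \<longleftrightarrow> P \<in> \<Sigma> \<and> Cod C (fst P) = Y \<and> Q \<in> \<Sigma> \<and> Cod C (fst Q) = Y \<and>
              a \<in> hom C (Dom C (fst P)) (Dom C (fst Q)) \<and>
              Cmp C (fst Q) a = fst P \<and> Cmp C a (snd P) = snd Q"
  by (simp add: Sigma_over_def)
lemma SO_dom: "Dom (Sigma_over C \<Sigma> Y) (P, Q, a) = P" by (simp add: Sigma_over_def)
lemma SO_cod: "Cod (Sigma_over C \<Sigma> Y) (P, Q, a) = Q" by (simp add: Sigma_over_def)
lemma SO_cmp: "Cmp (Sigma_over C \<Sigma> Y) (Q', R, a') (P, Q, a) = (P, R, Cmp C a' a)" by (simp add: Sigma_over_def)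
lemma SO_idn: "Idn (Sigma_over C \<Sigma> Y) P = (P, P, Idn C (Dom C (fst P)))" by (simp add: Sigma_over_def)

lemma part2:
  fixes C :: "('o, 'a, 'm) cat_scheme"
  assumes cat: "category C" and fc: "finitely_complete C" and cls: "class_of_split_epis C \<Sigma>"
    and pm: "Sigma_protomodular C \<Sigma>" and pc: "point_congruous C \<Sigma>"
    and yh: "y \<in> hom C Y' Y"
    and A: "A \<in> Arr (Sigma_over C \<Sigma> Y)"
    and I: "iso (Sigma_over C \<Sigma> Y') (base_change C y A)"
  shows "iso (Sigma_over C \<Sigma> Y) A"
proof -
  obtain f s g t a where Ae: "A = ((f, s), (g, t), a)" by (metis prod.exhaust)
  have P: "(f, s) \<in> \<Sigma>" and Q: "(g, t) \<in> \<Sigma>" and ef: "Cod C f = Y" and eg: "Cod C g = Y"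
    and ah: "a \<in> hom C (Dom C f) (Dom C g)" and ga: "Cmp C g a = f" and as: "Cmp C a s = t"
    using A unfolding Ae SO_arr by auto
  have sf: "split_epi C f s" and sg: "split_epi C g t" using P Q cls unfolding class_of_split_epis_def by auto
  have fA: "f \<in> Arr C" and gA: "g \<in> Arr C" using sf sg unfolding split_epi_def by auto
  have yA: "y \<in> Arr C" "Cod C y = Y" "Dom C y = Y'" using yh by (auto simp: hom_def)
  obtain x1 f1 where pd1: "pb_data C f y = (x1, f1)" by (cases "pb_data C f y")
  obtain x2 f2 where pd2: "pb_data C g y = (x2, f2)" by (cases "pb_data C g y")
  have pb1: "is_pullback C f y x1 f1" using pb_data_ok[OF cat fc fA yA(1)] ef yA pd1 by simp
  have pb2: "is_pullback C g y x2 f2" using pb_data_ok[OF cat fc gA yA(1)] eg yA pd2 by simp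
  note B1 = pbD[OF pb1] and B2 = pbD[OF pb2]
  define mm where "mm = (THE m. m \<in> hom C (Dom C x1) (Dom C x2) \<and> Cmp C f2 m = f1 \<and> Cmp C x2 m = Cmp C a x1)"
  have ax1: "Cmp C a x1 \<in> hom C (Dom C x1) (Dom C g)" using comp_hom[OF cat B1(3)] ah by simp
  have f1h: "f1 \<in> hom C (Dom C x1) (Dom C y)" using B1(4) .
  have sq: "Cmp C g (Cmp C a x1) = Cmp C y f1"
    using assoc[OF cat B1(3) ah B2(1)] ga B1(5) by simp
  have ex: "\<exists>!m. m \<in> hom C (Dom C x1) (Dom C x2) \<and> Cmp C x2 m = Cmp C a x1 \<and> Cmp C f2 m = f1"
    using pb2 ax1 f1h sq unfolding is_pullback_def by blast
  have ex2: "\<exists>!m. m \<in> hom C (Dom C x1) (Dom C x2) \<and> Cmp C f2 m = f1 \<and> Cmp C x2 m = Cmp C a x1"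
    using ex by (metis (no_types, lifting))
  have mmP: "mm \<in> hom C (Dom C x1) (Dom C x2) \<and> Cmp C f2 mm = f1 \<and> Cmp C x2 mm = Cmp C a x1"
    unfolding mm_def by (rule theI'[OF ex2])
  define B1o where "B1o = bc_obj C y (f, s)"
  define B2o where "B2o = bc_obj C y (g, t)"
  have fB1: "fst B1o = f1" unfolding B1o_def bc_obj_def using pd1 by simp
  have fB2: "fst B2o = f2" unfolding B2o_def bc_obj_def using pd2 by simp
  have bc: "base_change C y A = (B1o, B2o, mm)"
    unfolding Ae base_change_def B1o_def B2o_def mm_def using pd1 pd2 by simp
  have df1: "Dom C f1 = Dom C x1" and df2: "Dom C f2 = Dom C x2" using B1(4) B2(4) by (auto simp: hom_def)
  obtain G where Gh: "G \<in> hom (Sigma_over C \<Sigma> Y') B2o B1o"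
    and G1: "Cmp (Sigma_over C \<Sigma> Y') G (B1o, B2o, mm) = Idn (Sigma_over C \<Sigma> Y') B1o"
    and G2: "Cmp (Sigma_over C \<Sigma> Y') (B1o, B2o, mm) G = Idn (Sigma_over C \<Sigma> Y') B2o"
    using I unfolding bc iso_def by (auto simp: SO_dom SO_cod)
  obtain X Z n where Ge: "G = (X, Z, n)" by (metis prod.exhaust)
  have XZ: "X = B2o" "Z = B1o" and nA: "(B2o, B1o, n) \<in> Arr (Sigma_over C \<Sigma> Y')"
    using Gh unfolding Ge hom_def by (auto simp: SO_dom SO_cod)
  have nh: "n \<in> hom C (Dom C x2) (Dom C x1)" using nA fB1 fB2 df1 df2 unfolding SO_arr by simp
  have nm: "Cmp C n mm = Idn C (Dom C x1)" using G1 unfolding Ge XZ SO_cmp SO_idn using fB1 df1 by simp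
  have mn: "Cmp C mm n = Idn C (Dom C x2)" using G2 unfolding Ge XZ SO_cmp SO_idn using fB2 df2 by simp
  have mi: "iso C mm" unfolding iso_def using mmP nh nm mn by (auto simp: hom_def)
  have ia: "iso C a"
    by (rule core[OF cat fc pc pm P Q sf sg ah ga as ef eg yh pb1 pb2])
       (use mmP mi in auto)
  obtain a' where a'h: "a' \<in> hom C (Cod C a) (Dom C a)" and a'a: "Cmp C a' a = Idn C (Dom C a)"
    and aa': "Cmp C a a' = Idn C (Cod C a)" using iso_inv[OF ia] by blast
  have aD: "a \<in> Arr C" "Dom C a = Dom C f" "Cod C a = Dom C g" using ah by (auto simp: hom_def)
  have a'H: "a' \<in> hom C (Dom C g) (Dom C f)" using a'h aD by simp
  have sh: "s \<in> hom C Y (Dom C f)" using sf ef unfolding split_epi_def by simp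
  have fa': "Cmp C f a' = g"
  proof -
    have "Cmp C f a' = Cmp C (Cmp C g a) a'" using ga by simp
    also have "\<dots> = Cmp C g (Cmp C a a')" using assoc[OF cat a'H ah B2(1)] by simp
    also have "\<dots> = g" using aa' aD idr[OF cat B2(1)] by simp
    finally show ?thesis .
  qed
  have a't: "Cmp C a' t = s"
  proof -
    have "Cmp C a' t = Cmp C a' (Cmp C a s)" using as by simp
    also have "\<dots> = Cmp C (Cmp C a' a) s" using assoc[OF cat sh ah a'H] by simp
    also have "\<dots> = s" using a'a aD idl[OF cat sh] by simp
    finally show ?thesis .
  qed
  have invA: "((g, t), (f, s), a') \<in> Arr (Sigma_over C \<Sigma> Y)"
    unfolding SO_arr using P Q ef eg a'H fa' a't by simp
  show ?thesis
    unfolding iso_def Ae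
  proof (intro conjI bexI)
    show "((f, s), (g, t), a) \<in> Arr (Sigma_over C \<Sigma> Y)" using A Ae by simp
    show "((g, t), (f, s), a') \<in> hom (Sigma_over C \<Sigma> Y) (Cod (Sigma_over C \<Sigma> Y) ((f, s), (g, t), a))
       (Dom (Sigma_over C \<Sigma> Y) ((f, s), (g, t), a))"
      using invA by (simp add: hom_def SO_dom SO_cod)
    show "Cmp (Sigma_over C \<Sigma> Y) ((g, t), (f, s), a') ((f, s), (g, t), a) =
      Idn (Sigma_over C \<Sigma> Y) (Dom (Sigma_over C \<Sigma> Y) ((f, s), (g, t), a))"
      using a'a aD by (simp add: SO_dom SO_cmp SO_idn)
    show "Cmp (Sigma_over C \<Sigma> Y) ((f, s), (g, t), a) ((g, t), (f, s), a') =
      Idn (Sigma_over C \<Sigma> Y) (Cod (Sigma_over C \<Sigma> Y) ((f, s), (g, t), a))"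
      using aa' aD by (simp add: SO_cod SO_cmp SO_idn)
  qed
qed

theorem theorem8p4:
  fixes C :: "('o, 'a) cat" and \<Sigma> :: "('a \<times> 'a) set"
  assumes "category C"
    and "finitely_complete C"
    and "class_of_split_epis C \<Sigma>"
    and "fibrational C \<Sigma>"
  shows "(Sigma_protomodular C \<Sigma> \<longrightarrow> Sigma_Maltsev C \<Sigma>) \<and>
         (Sigma_protomodular C \<Sigma> \<and> point_congruous C \<Sigma> \<longrightarrow>
            (\<forall>Y Y' y. y \<in> hom C Y' Y \<longrightarrow>
               conservative (Sigma_over C \<Sigma> Y) (Sigma_over C \<Sigma> Y') (base_change C y)))"
  using part1[OF assms(1) assms(4)] part2[OF assms(1) assms(2) assms(3)]
  unfolding conservative_def by blast

end
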